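(* If $x\in CBV[0,1]$ and $A\in\widehat{\Omega}[0,1]$, then the Riemann–Stieltjes integral $\int_0^1A(s)\,dx(s)$ exists.
   Context: $CBV[0,1]$ denotes the continuous real functions of bounded Jordan variation on $[0,1]$. For $\varepsilon>0$ and $a<b$, a bounded $A\colon[a,b]\to\mathbb R$ belongs to $\Omega_\varepsilon[a,b]$ if there exists $\delta>0$ such that $\operatorname{osc}_{[t,s]}A\le\varepsilon$ whenever $t,s\in[a,b]$ and $0\le s-t\le\delta$, where $\operatorname{osc}_{[t,s]}A=\sup_{t\le\tau\le\sigma\le s}|A(\sigma)-A(\tau)|$. $\Omega[0,1]$ is the set of bounded $A\colon[0,1]\to\mathbb R$ such that for every $\varepsilon>0$ there is $a\in(0,1)$ with $A|_{[0,a]}\in\Omega_\varepsilon[0,a]$ and $A|_{[a,1]}$ of bounded variation on $[a,1]$. $\widehat{\Omega}[0,1]=\Omega[0,1]\cup C[0,1]\cup BV[0,1]$. *)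

theory Defs
  imports "HOL-Analysis.Analysis"
begin

definition is_partition :: "real \<Rightarrow> real \<Rightarrow> nat \<Rightarrow> (nat \<Rightarrow> real) \<Rightarrow> bool" where
  "is_partition a b n t \<longleftrightarrow> t 0 = a \<and> t n = b \<and> (\<forall>i<n. t i < t (Suc i))"

definition bounded_variation_on :: "(real \<Rightarrow> real) \<Rightarrow> real \<Rightarrow> real \<Rightarrow> bool" where
  "bounded_variation_on A a b \<longleftrightarrow>
     (\<exists>M. \<forall>n t. is_partition a b n t \<longrightarrow> (\<Sum>i<n. \<bar>A (t (Suc i)) - A (t i)\<bar>) \<le> M)"

definition osc :: "(real \<Rightarrow> real) \<Rightarrow> real \<Rightarrow> real \<Rightarrow> real" where
  "osc A t s = (SUP p\<in>{(\<tau>,\<sigma>). t \<le> \<tau> \<and> \<tau> \<le> \<sigma> \<and> \<sigma> \<le> s}. \<bar>A (snd p) - A (fst p)\<bar>)"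

definition bounded_on :: "(real \<Rightarrow> real) \<Rightarrow> real \<Rightarrow> real \<Rightarrow> bool" where
  "bounded_on A a b \<longleftrightarrow> (\<exists>M. \<forall>s\<in>{a..b}. \<bar>A s\<bar> \<le> M)"

definition Omega_eps :: "real \<Rightarrow> real \<Rightarrow> real \<Rightarrow> (real \<Rightarrow> real) \<Rightarrow> bool" where
  "Omega_eps \<epsilon> a b A \<longleftrightarrow> bounded_on A a b \<and>
     (\<exists>\<delta>>0. \<forall>t\<in>{a..b}. \<forall>s\<in>{a..b}. 0 \<le> s - t \<and> s - t \<le> \<delta> \<longrightarrow> osc A t s \<le> \<epsilon>)"

definition Omega01 :: "(real \<Rightarrow> real) \<Rightarrow> bool" where
  "Omega01 A \<longleftrightarrow> bounded_on A 0 1 \<and>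
     (\<forall>\<epsilon>>0. \<exists>a\<in>{0<..<1}. Omega_eps \<epsilon> 0 a A \<and> bounded_variation_on A a 1)"

definition Omega_hat01 :: "(real \<Rightarrow> real) \<Rightarrow> bool" where
  "Omega_hat01 A \<longleftrightarrow> Omega01 A \<or> continuous_on {0..1} A \<or> bounded_variation_on A 0 1"

definition RS_sum :: "(real \<Rightarrow> real) \<Rightarrow> (real \<Rightarrow> real) \<Rightarrow> nat \<Rightarrow> (nat \<Rightarrow> real) \<Rightarrow> (nat \<Rightarrow> real) \<Rightarrow> real" where
  "RS_sum A x n t \<tau> = (\<Sum>i<n. A (\<tau> i) * (x (t (Suc i)) - x (t i)))"

definition RS_integrable :: "(real \<Rightarrow> real) \<Rightarrow> (real \<Rightarrow> real) \<Rightarrow> real \<Rightarrow> real \<Rightarrow> bool" where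
  "RS_integrable A x a b \<longleftrightarrow>
     (\<exists>I. \<forall>\<epsilon>>0. \<exists>\<delta>>0. \<forall>n t \<tau>.
        is_partition a b n t \<and> (\<forall>i<n. t (Suc i) - t i < \<delta>) \<and>
        (\<forall>i<n. t i \<le> \<tau> i \<and> \<tau> i \<le> t (Suc i))
        \<longrightarrow> \<bar>RS_sum A x n t \<tau> - I\<bar> < \<epsilon>)"

end

theory Submission
  imports Defs
begin



lemma part_le:
  assumes "is_partition a b n t" "i \<le> j" "j \<le> n"
  shows "t i \<le> t j"
  using assms(2,3)
proof (induction j)
  case 0 then show ?case by simp
next
  case (Suc j)
  show ?case
  proof (cases "i = Suc j")
    case True thus ?thesis by simp
  next
    case False
    with Suc.prems have "i \<le> j" by simp
    with Suc.IH Suc.prems have "t i \<le> t j" by simp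
    moreover have "t j < t (Suc j)" using assms(1) Suc.prems unfolding is_partition_def by simp
    ultimately show ?thesis by simp
  qed
qed

lemma part_less:
  assumes "is_partition a b n t" "i < j" "j \<le> n"
  shows "t i < t j"
proof -
  have "t i < t (Suc i)" using assms unfolding is_partition_def by simp
  also have "\<dots> \<le> t j" using part_le[OF assms(1)] assms by simp
  finally show ?thesis .
qed

lemma part_prepend_or_not:
  fixes A :: "real \<Rightarrow> real"
  assumes "is_partition u b n t" "a \<le> u"
  shows "\<exists>n' t'. is_partition a b n' t' \<and>
     \<bar>A u - A a\<bar> + (\<Sum>i<n. \<bar>A (t (Suc i)) - A (t i)\<bar>) \<le> (\<Sum>i<n'. \<bar>A (t' (Suc i)) - A (t' i)\<bar>)"
proof (cases "a = u")
  case True thus ?thesis using assms by (intro exI[of _ n] exI[of _ t]) simp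
next
  case False
  hence au: "a < u" using assms by simp
  define t' where "t' = (\<lambda>i. if i = 0 then a else t (i - 1))"
  have "is_partition a b (Suc n) t'"
    using assms au unfolding is_partition_def t'_def
    by (auto simp: less_Suc_eq_0_disj)
  moreover have "(\<Sum>i<Suc n. \<bar>A (t' (Suc i)) - A (t' i)\<bar>) = \<bar>A u - A a\<bar> + (\<Sum>i<n. \<bar>A (t (Suc i)) - A (t i)\<bar>)"
  proof -
    have "(\<Sum>i<Suc n. \<bar>A (t' (Suc i)) - A (t' i)\<bar>) = \<bar>A (t' 1) - A (t' 0)\<bar> + (\<Sum>i<n. \<bar>A (t' (Suc (Suc i))) - A (t' (Suc i))\<bar>)"
      by (subst sum.lessThan_Suc_shift) simp
    also have "\<dots> = \<bar>A u - A a\<bar> + (\<Sum>i<n. \<bar>A (t (Suc i)) - A (t i)\<bar>)"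
      using assms(1) unfolding t'_def is_partition_def by simp
    finally show ?thesis .
  qed
  ultimately show ?thesis by (metis order_refl)
qed

lemma mono_seq_var:
  fixes A :: "real \<Rightarrow> real"
  assumes "\<forall>j<m. u j \<le> u (Suc j)" "a \<le> u 0" "u m \<le> b"
  shows "\<exists>n t. is_partition a b n t \<and> \<bar>A (u 0) - A a\<bar> + (\<Sum>j<m. \<bar>A (u (Suc j)) - A (u j)\<bar>) + \<bar>A b - A (u m)\<bar>
     \<le> (\<Sum>i<n. \<bar>A (t (Suc i)) - A (t i)\<bar>)"
  using assms
proof (induction m arbitrary: a u)
  case 0
  have "\<exists>n t. is_partition (u 0) b n t \<and> \<bar>A b - A (u 0)\<bar> \<le> (\<Sum>i<n. \<bar>A (t (Suc i)) - A (t i)\<bar>)"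
  proof (cases "u 0 = b")
    case True
    hence "is_partition (u 0) b 0 (\<lambda>_. b)" unfolding is_partition_def by simp
    thus ?thesis using True by (intro exI[of _ 0] exI[of _ "\<lambda>_. b"]) simp
  next
    case False
    hence "is_partition (u 0) b 1 (\<lambda>i. if i = 0 then u 0 else b)" using 0 unfolding is_partition_def by auto
    thus ?thesis by (intro exI[of _ 1] exI[of _ "\<lambda>i. if i = 0 then u 0 else b"]) simp
  qed
  then obtain n t where nt: "is_partition (u 0) b n t" "\<bar>A b - A (u 0)\<bar> \<le> (\<Sum>i<n. \<bar>A (t (Suc i)) - A (t i)\<bar>)" by blast
  from part_prepend_or_not[OF nt(1) \<open>a \<le> u 0\<close>, of A] obtain n' t' where
    "is_partition a b n' t'" "\<bar>A (u 0) - A a\<bar> + (\<Sum>i<n. \<bar>A (t (Suc i)) - A (t i)\<bar>) \<le> (\<Sum>i<n'. \<bar>A (t' (Suc i)) - A (t' i)\<bar>)"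
    by blast
  with nt(2) show ?case by (intro exI[of _ n'] exI[of _ t']) simp
next
  case (Suc m)
  have "\<exists>n t. is_partition (u 0) b n t \<and> \<bar>A (u 1) - A (u 0)\<bar> + (\<Sum>j<m. \<bar>A (u (Suc (Suc j))) - A (u (Suc j))\<bar>) + \<bar>A b - A (u (Suc m))\<bar>
     \<le> (\<Sum>i<n. \<bar>A (t (Suc i)) - A (t i)\<bar>)"
    using Suc.IH[of "\<lambda>j. u (Suc j)" "u 0"] Suc.prems by auto
  then obtain n t where nt: "is_partition (u 0) b n t" "\<bar>A (u 1) - A (u 0)\<bar> + (\<Sum>j<m. \<bar>A (u (Suc (Suc j))) - A (u (Suc j))\<bar>) + \<bar>A b - A (u (Suc m))\<bar>
     \<le> (\<Sum>i<n. \<bar>A (t (Suc i)) - A (t i)\<bar>)" by blast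
  from part_prepend_or_not[OF nt(1) \<open>a \<le> u 0\<close>, of A] obtain n' t' where
    "is_partition a b n' t'" "\<bar>A (u 0) - A a\<bar> + (\<Sum>i<n. \<bar>A (t (Suc i)) - A (t i)\<bar>) \<le> (\<Sum>i<n'. \<bar>A (t' (Suc i)) - A (t' i)\<bar>)"
    by blast
  moreover have "(\<Sum>j<Suc m. \<bar>A (u (Suc j)) - A (u j)\<bar>) = \<bar>A (u 1) - A (u 0)\<bar> + (\<Sum>j<m. \<bar>A (u (Suc (Suc j))) - A (u (Suc j))\<bar>)"
    by (subst sum.lessThan_Suc_shift) simp
  ultimately show ?case using nt(2) by (intro exI[of _ n'] exI[of _ t']) simp
qed

lemma bv_mono_seq:
  assumes "bounded_variation_on A a b"
  obtains M where "\<And>m u. \<forall>j<m. u j \<le> u (Suc j) \<Longrightarrow> a \<le> u 0 \<Longrightarrow> u m \<le> b \<Longrightarrow>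
     (\<Sum>j<m. \<bar>A (u (Suc j)) - A (u j)\<bar>) \<le> M"
proof -
  obtain M where M: "\<And>n t. is_partition a b n t \<Longrightarrow> (\<Sum>i<n. \<bar>A (t (Suc i)) - A (t i)\<bar>) \<le> M"
    using assms unfolding bounded_variation_on_def by blast
  show ?thesis
  proof (rule that)
    fix m u assume h: "\<forall>j<m. u j \<le> u (Suc j)" "a \<le> u 0" "u m \<le> b"
    from mono_seq_var[OF h, of A] obtain n t where
      "is_partition a b n t" "\<bar>A (u 0) - A a\<bar> + (\<Sum>j<m. \<bar>A (u (Suc j)) - A (u j)\<bar>) + \<bar>A b - A (u m)\<bar>
     \<le> (\<Sum>i<n. \<bar>A (t (Suc i)) - A (t i)\<bar>)" by blast
    with M[of n t] show "(\<Sum>j<m. \<bar>A (u (Suc j)) - A (u j)\<bar>) \<le> M" by simp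
  qed
qed




lemma bv_left:
  assumes "bounded_variation_on A a b" "\<epsilon> > 0"
  shows "\<exists>h>0. \<forall>u v. a \<le> u \<longrightarrow> v \<le> b \<longrightarrow> c - h < u \<longrightarrow> u \<le> v \<longrightarrow> v < c \<longrightarrow> \<bar>A v - A u\<bar> \<le> \<epsilon>"
proof (rule ccontr)
  assume "\<not> ?thesis"
  hence H: "\<And>h. h > 0 \<Longrightarrow> \<exists>u v. a \<le> u \<and> v \<le> b \<and> c - h < u \<and> u \<le> v \<and> v < c \<and> \<bar>A v - A u\<bar> > \<epsilon>"
    by (meson not_le)
  obtain M where M: "\<And>m u. \<forall>j<m. u j \<le> u (Suc j) \<Longrightarrow> a \<le> u 0 \<Longrightarrow> u m \<le> b \<Longrightarrow>
     (\<Sum>j<m. \<bar>A (u (Suc j)) - A (u j)\<bar>) \<le> M"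
    using bv_mono_seq[OF assms(1)] by blast
  have K: "\<exists>w. (\<forall>j<2*K. w j \<le> w (Suc j)) \<and> a \<le> w 0 \<and> w (2*K) < c \<and> w (2*K) \<le> b \<and>
      real K * \<epsilon> \<le> (\<Sum>j<2*K. \<bar>A (w (Suc j)) - A (w j)\<bar>)" for K
  proof (induction K)
    case 0
    from H[of 1] obtain u v where "a \<le> u \<and> v \<le> b \<and> c - 1 < u \<and> u \<le> v \<and> v < c" by auto
    thus ?case by (intro exI[of _ "\<lambda>_. u"]) auto
  next
    case (Suc K)
    then obtain w where w: "\<forall>j<2*K. w j \<le> w (Suc j)" "a \<le> w 0" "w (2*K) < c" "w (2*K) \<le> b"
      "real K * \<epsilon> \<le> (\<Sum>j<2*K. \<bar>A (w (Suc j)) - A (w j)\<bar>)" by blast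
    from H[of "c - w (2*K)"] w(3) obtain u v where uv: "a \<le> u" "v \<le> b" "w (2*K) < u" "u \<le> v" "v < c"
      "\<bar>A v - A u\<bar> > \<epsilon>" by auto
    define w' where "w' = w(Suc (2*K) := u, Suc (Suc (2*K)) := v)"
    have eq: "(\<Sum>j<2*K. \<bar>A (w' (Suc j)) - A (w' j)\<bar>) = (\<Sum>j<2*K. \<bar>A (w (Suc j)) - A (w j)\<bar>)"
      by (rule sum.cong) (auto simp: w'_def)
    have "(\<Sum>j<2*Suc K. \<bar>A (w' (Suc j)) - A (w' j)\<bar>) =
       (\<Sum>j<2*K. \<bar>A (w' (Suc j)) - A (w' j)\<bar>) + \<bar>A u - A (w (2*K))\<bar> + \<bar>A v - A u\<bar>"
      by (simp add: w'_def)
    hence "real (Suc K) * \<epsilon> \<le> (\<Sum>j<2*Suc K. \<bar>A (w' (Suc j)) - A (w' j)\<bar>)"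
      using eq w(5) uv(6) by (simp add: algebra_simps)
    moreover have "\<forall>j<2*Suc K. w' j \<le> w' (Suc j)"
    proof (intro allI impI)
      fix j assume "j < 2 * Suc K"
      hence "j < 2*K \<or> j = 2*K \<or> j = Suc (2*K)" by auto
      thus "w' j \<le> w' (Suc j)" using w(1) uv by (auto simp: w'_def)
    qed
    moreover have "a \<le> w' 0" using w(2) by (simp add: w'_def)
    ultimately show ?case using uv by (intro exI[of _ w']) (simp add: w'_def)
  qed
  obtain K :: nat where "M / \<epsilon> < real K" using reals_Archimedean2 by blast
  hence "M < real K * \<epsilon>" using assms(2) by (simp add: field_simps)
  moreover from K[of K] obtain w where w: "(\<forall>j<2*K. w j \<le> w (Suc j))" "a \<le> w 0" "w (2*K) \<le> b"
      "real K * \<epsilon> \<le> (\<Sum>j<2*K. \<bar>A (w (Suc j)) - A (w j)\<bar>)" by blast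
  moreover have "(\<Sum>j<2*K. \<bar>A (w (Suc j)) - A (w j)\<bar>) \<le> M" using M[OF w(1-3)] .
  ultimately show False by linarith
qed

lemma bv_right:
  assumes "bounded_variation_on A a b" "\<epsilon> > 0"
  shows "\<exists>h>0. \<forall>u v. a \<le> u \<longrightarrow> v \<le> b \<longrightarrow> c < u \<longrightarrow> u \<le> v \<longrightarrow> v < c + h \<longrightarrow> \<bar>A v - A u\<bar> \<le> \<epsilon>"
proof (rule ccontr)
  assume "\<not> ?thesis"
  hence H: "\<And>h. h > 0 \<Longrightarrow> \<exists>u v. a \<le> u \<and> v \<le> b \<and> c < u \<and> u \<le> v \<and> v < c + h \<and> \<bar>A v - A u\<bar> > \<epsilon>"
    by (meson not_le)
  obtain M where M: "\<And>m u. \<forall>j<m. u j \<le> u (Suc j) \<Longrightarrow> a \<le> u 0 \<Longrightarrow> u m \<le> b \<Longrightarrow>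
     (\<Sum>j<m. \<bar>A (u (Suc j)) - A (u j)\<bar>) \<le> M"
    using bv_mono_seq[OF assms(1)] by blast
  have K: "\<exists>w. (\<forall>j<2*K. w j \<le> w (Suc j)) \<and> a \<le> w 0 \<and> c < w 0 \<and> w (2*K) \<le> b \<and>
      real K * \<epsilon> \<le> (\<Sum>j<2*K. \<bar>A (w (Suc j)) - A (w j)\<bar>)" for K
  proof (induction K)
    case 0
    from H[of 1] obtain u v where "a \<le> u \<and> v \<le> b \<and> c < u \<and> u \<le> v" by auto
    thus ?case by (intro exI[of _ "\<lambda>_. v"]) auto
  next
    case (Suc K)
    then obtain w where w: "\<forall>j<2*K. w j \<le> w (Suc j)" "a \<le> w 0" "c < w 0" "w (2*K) \<le> b"
      "real K * \<epsilon> \<le> (\<Sum>j<2*K. \<bar>A (w (Suc j)) - A (w j)\<bar>)" by blast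
    from H[of "w 0 - c"] w(3) obtain u v where uv: "a \<le> u" "v \<le> b" "c < u" "u \<le> v" "v < w 0"
      "\<bar>A v - A u\<bar> > \<epsilon>" by auto
    define w' where "w' = (\<lambda>j. if j = 0 then u else if j = 1 then v else w (j - 2))"
    have "(\<Sum>j<2*Suc K. \<bar>A (w' (Suc j)) - A (w' j)\<bar>) =
       \<bar>A v - A u\<bar> + \<bar>A (w 0) - A v\<bar> + (\<Sum>j<2*K. \<bar>A (w (Suc j)) - A (w j)\<bar>)"
    proof -
      have "(\<Sum>j<2*Suc K. \<bar>A (w' (Suc j)) - A (w' j)\<bar>) = (\<Sum>j<Suc (Suc (2*K)). \<bar>A (w' (Suc j)) - A (w' j)\<bar>)"
        by simp
      also have "\<dots> = \<bar>A (w' 1) - A (w' 0)\<bar> + (\<Sum>j<Suc (2*K). \<bar>A (w' (Suc (Suc j))) - A (w' (Suc j))\<bar>)"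
        by (subst sum.lessThan_Suc_shift) simp
      also have "\<dots> = \<bar>A (w' 1) - A (w' 0)\<bar> + \<bar>A (w' 2) - A (w' 1)\<bar> + (\<Sum>j<2*K. \<bar>A (w' (Suc (Suc (Suc j)))) - A (w' (Suc (Suc j)))\<bar>)"
        by (subst sum.lessThan_Suc_shift) (simp add: numeral_2_eq_2)
      also have "\<dots> = \<bar>A v - A u\<bar> + \<bar>A (w 0) - A v\<bar> + (\<Sum>j<2*K. \<bar>A (w (Suc j)) - A (w j)\<bar>)"
        by (simp add: w'_def numeral_2_eq_2)
      finally show ?thesis .
    qed
    hence "real (Suc K) * \<epsilon> \<le> (\<Sum>j<2*Suc K. \<bar>A (w' (Suc j)) - A (w' j)\<bar>)"
      using w(5) uv(6) by (simp add: algebra_simps)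
    moreover have "\<forall>j<2*Suc K. w' j \<le> w' (Suc j)"
    proof (intro allI impI)
      fix j assume "j < 2 * Suc K"
      hence "j = 0 \<or> j = 1 \<or> (j \<ge> 2 \<and> j - 2 < 2*K)" by auto
      moreover have "j \<ge> 2 \<Longrightarrow> Suc j - 2 = Suc (j - 2)" by simp
      ultimately show "w' j \<le> w' (Suc j)" using w(1) uv by (auto simp: w'_def)
    qed
    moreover have "w' (2 * Suc K) = w (2*K)" by (simp add: w'_def)
    ultimately show ?case using uv w by (intro exI[of _ w']) (simp add: w'_def)
  qed
  obtain K :: nat where "M / \<epsilon> < real K" using reals_Archimedean2 by blast
  hence "M < real K * \<epsilon>" using assms(2) by (simp add: field_simps)
  moreover from K[of K] obtain w where w: "(\<forall>j<2*K. w j \<le> w (Suc j))" "a \<le> w 0" "w (2*K) \<le> b"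
      "real K * \<epsilon> \<le> (\<Sum>j<2*K. \<bar>A (w (Suc j)) - A (w j)\<bar>)" by blast
  moreover have "(\<Sum>j<2*K. \<bar>A (w (Suc j)) - A (w j)\<bar>) \<le> M" using M[OF w(1-3)] .
  ultimately show False by linarith
qed




definition LOC :: "(real \<Rightarrow> real) \<Rightarrow> real \<Rightarrow> bool" where
  "LOC A \<epsilon> \<longleftrightarrow> (\<forall>c\<in>{0..1}. \<exists>h>0.
     (\<forall>u v. 0 \<le> u \<longrightarrow> v \<le> 1 \<longrightarrow> c - h < u \<longrightarrow> u \<le> v \<longrightarrow> v < c \<longrightarrow> \<bar>A v - A u\<bar> \<le> \<epsilon>) \<and>
     (\<forall>u v. 0 \<le> u \<longrightarrow> v \<le> 1 \<longrightarrow> c < u \<longrightarrow> u \<le> v \<longrightarrow> v < c + h \<longrightarrow> \<bar>A v - A u\<bar> \<le> \<epsilon>))"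

definition FP :: "(real \<Rightarrow> real) \<Rightarrow> real \<Rightarrow> real set \<Rightarrow> bool" where
  "FP A \<epsilon> F \<longleftrightarrow> (\<forall>u v. 0 \<le> u \<longrightarrow> u \<le> v \<longrightarrow> v \<le> 1 \<longrightarrow> (\<forall>p\<in>F. p < u \<or> v < p) \<longrightarrow> \<bar>A v - A u\<bar> \<le> \<epsilon>)"

definition LC :: "real set \<Rightarrow> (real \<Rightarrow> real) \<Rightarrow> bool" where
  "LC F B \<longleftrightarrow> (\<forall>u v. 0 \<le> u \<longrightarrow> u \<le> v \<longrightarrow> v \<le> 1 \<longrightarrow> (\<forall>p\<in>F. p < u \<or> v < p) \<longrightarrow> B u = B v)"

definition stepf :: "real set \<Rightarrow> (real \<Rightarrow> real) \<Rightarrow> real \<Rightarrow> real" where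
  "stepf F A s = (if s \<in> F then A s else A ((Max {q\<in>F. q < s} + Min {q\<in>F. s < q}) / 2))"

lemma LOC_FP:
  assumes "LOC A \<epsilon>"
  shows "\<exists>F. finite F \<and> 0 \<in> F \<and> 1 \<in> F \<and> FP A \<epsilon> F"
proof -
  have "\<forall>c\<in>{0..1::real}. \<exists>h. h > 0 \<and>
     (\<forall>u v. 0 \<le> u \<longrightarrow> v \<le> 1 \<longrightarrow> c - h < u \<longrightarrow> u \<le> v \<longrightarrow> v < c \<longrightarrow> \<bar>A v - A u\<bar> \<le> \<epsilon>) \<and>
     (\<forall>u v. 0 \<le> u \<longrightarrow> v \<le> 1 \<longrightarrow> c < u \<longrightarrow> u \<le> v \<longrightarrow> v < c + h \<longrightarrow> \<bar>A v - A u\<bar> \<le> \<epsilon>)"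
    using assms unfolding LOC_def .
  then obtain h where h: "\<forall>c\<in>{0..1::real}. h c > 0 \<and>
     (\<forall>u v. 0 \<le> u \<longrightarrow> v \<le> 1 \<longrightarrow> c - h c < u \<longrightarrow> u \<le> v \<longrightarrow> v < c \<longrightarrow> \<bar>A v - A u\<bar> \<le> \<epsilon>) \<and>
     (\<forall>u v. 0 \<le> u \<longrightarrow> v \<le> 1 \<longrightarrow> c < u \<longrightarrow> u \<le> v \<longrightarrow> v < c + h c \<longrightarrow> \<bar>A v - A u\<bar> \<le> \<epsilon>)"
    by (rule bchoice[THEN exE]) blast
  have cover: "{0..1::real} \<subseteq> (\<Union>c\<in>{0..1}. ball c (h c))"
  proof
    fix y :: real assume y: "y \<in> {0..1}"
    have "h y > 0" using bspec[OF h y] by (rule conjunct1)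
    hence "y \<in> ball y (h y)" by simp
    thus "y \<in> (\<Union>c\<in>{0..1}. ball c (h c))" using y by blast
  qed
  obtain C where C: "C \<subseteq> {0..1}" "finite C" "{0..1::real} \<subseteq> (\<Union>c\<in>C. ball c (h c))"
    by (rule compactE_image[where S="{0..1::real}" and C="{0..1::real}" and f="\<lambda>c. ball c (h c)"])
      (auto simp: cover)
  define F where "F = C \<union> (\<lambda>c. c - h c) ` C \<union> (\<lambda>c. c + h c) ` C \<union> {0,1}"
  have "FP A \<epsilon> F"
    unfolding FP_def
  proof (intro allI impI)
    fix u v :: real
    assume uv: "0 \<le> u" "u \<le> v" "v \<le> 1" and P: "\<forall>p\<in>F. p < u \<or> v < p"
    have "u \<in> {0..1}" using uv by auto
    then obtain c where c: "c \<in> C" "dist c u < h c" using C(3) by (auto simp: subset_iff)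
    hence c01: "c \<in> {0..1}" using C(1) by auto
    have hL: "\<And>u v. 0 \<le> u \<Longrightarrow> v \<le> 1 \<Longrightarrow> c - h c < u \<Longrightarrow> u \<le> v \<Longrightarrow> v < c \<Longrightarrow> \<bar>A v - A u\<bar> \<le> \<epsilon>"
      using bspec[OF h c01] by blast
    have hR: "\<And>u v. 0 \<le> u \<Longrightarrow> v \<le> 1 \<Longrightarrow> c < u \<Longrightarrow> u \<le> v \<Longrightarrow> v < c + h c \<Longrightarrow> \<bar>A v - A u\<bar> \<le> \<epsilon>"
      using bspec[OF h c01] by blast
    have "c < u \<or> v < c" using P c(1) unfolding F_def by blast
    thus "\<bar>A v - A u\<bar> \<le> \<epsilon>"
    proof
      assume cu: "c < u"
      have "c + h c < u \<or> v < c + h c" using P c(1) unfolding F_def by blast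
      hence "v < c + h c" using c(2) cu by (auto simp: dist_real_def)
      thus ?thesis using hR uv cu by blast
    next
      assume vc: "v < c"
      have "c - h c < u" using c(2) by (auto simp: dist_real_def)
      thus ?thesis using hL uv vc by blast
    qed
  qed
  moreover have "finite F" using C(2) unfolding F_def by simp
  moreover have "0 \<in> F" "1 \<in> F" unfolding F_def by auto
  ultimately show ?thesis by blast
qed




lemma stepf_props:
  assumes "finite F" "0 \<in> F" "1 \<in> F" "FP A \<epsilon> F" "\<epsilon> \<ge> 0"
  shows "LC F (stepf F A)" "\<forall>s\<in>{0..1}. \<bar>A s - stepf F A s\<bar> \<le> \<epsilon>"
proof -
  have FP': "\<And>u v. 0 \<le> u \<Longrightarrow> u \<le> v \<Longrightarrow> v \<le> 1 \<Longrightarrow> (\<forall>p\<in>F. p < u \<or> v < p) \<Longrightarrow> \<bar>A v - A u\<bar> \<le> \<epsilon>"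
    using assms(4) unfolding FP_def by blast
  show "LC F (stepf F A)"
    unfolding LC_def
  proof (intro allI impI)
    fix u v :: real
    assume uv: "0 \<le> u" "u \<le> v" "v \<le> 1" and P: "\<forall>p\<in>F. p < u \<or> v < p"
    have q: "q < u \<or> v < q" if "q \<in> F" for q using P that by blast
    have "u \<notin> F"
    proof
      assume "u \<in> F" from q[OF this] uv(2) show False by linarith
    qed
    moreover have "v \<notin> F"
    proof
      assume "v \<in> F" from q[OF this] uv(2) show False by linarith
    qed
    moreover have "{q\<in>F. q < u} = {q\<in>F. q < v}"
    proof (rule Collect_cong)
      fix q show "(q \<in> F \<and> q < u) = (q \<in> F \<and> q < v)"
        using q[of q] uv(2) by (cases "q \<in> F") auto
    qed
    moreover have "{q\<in>F. u < q} = {q\<in>F. v < q}"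
    proof (rule Collect_cong)
      fix q show "(q \<in> F \<and> u < q) = (q \<in> F \<and> v < q)"
        using q[of q] uv(2) by (cases "q \<in> F") auto
    qed
    ultimately show "stepf F A u = stepf F A v" unfolding stepf_def by simp
  qed
  show "\<forall>s\<in>{0..1}. \<bar>A s - stepf F A s\<bar> \<le> \<epsilon>"
  proof
    fix s :: real assume s: "s \<in> {0..1}"
    show "\<bar>A s - stepf F A s\<bar> \<le> \<epsilon>"
    proof (cases "s \<in> F")
      case True
      have "\<bar>A s - A s\<bar> \<le> \<epsilon>" using assms(5) by simp
      thus ?thesis using True unfolding stepf_def by simp
    next
      case False
      define L where "L = {q\<in>F. q < s}"
      define R where "R = {q\<in>F. s < q}"
      have s0: "s \<noteq> 0" using False assms(2) by auto
      have s1: "s \<noteq> 1" using False assms(3) by auto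
      have s01: "0 < s" "s < 1" using s s0 s1 by auto
      have L: "finite L" "0 \<in> L" using assms(1,2) s01 unfolding L_def by auto
      have R: "finite R" "1 \<in> R" using assms(1,3) s01 unfolding R_def by auto
      define l where "l = Max L"
      define r where "r = Min R"
      have lL: "l \<in> L" unfolding l_def using L by (intro Max_in) auto
      have rR: "r \<in> R" unfolding r_def using R by (intro Min_in) auto
      have lge: "\<And>q. q \<in> L \<Longrightarrow> q \<le> l" unfolding l_def using L by simp
      have rle: "\<And>q. q \<in> R \<Longrightarrow> r \<le> q" unfolding r_def using R by simp
      have l: "0 \<le> l" "l < s" using lge[OF L(2)] lL unfolding L_def by auto
      have r: "r \<le> 1" "s < r" using rle[OF R(2)] rR unfolding R_def by auto
      define m where "m = (l + r) / 2"
      have m: "l < m" "m < r" using l r unfolding m_def by auto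
      have noF: "p \<le> l \<or> r \<le> p" if "p \<in> F" for p
      proof -
        have "p \<noteq> s" using False that by auto
        hence "p < s \<or> s < p" by linarith
        thus ?thesis
        proof
          assume "p < s" hence "p \<in> L" using that unfolding L_def by simp
          thus ?thesis using lge by blast
        next
          assume "s < p" hence "p \<in> R" using that unfolding R_def by simp
          thus ?thesis using rle by blast
        qed
      qed
      have "\<bar>A s - A m\<bar> \<le> \<epsilon>"
      proof (cases "m \<le> s")
        case True
        show ?thesis
        proof (rule FP')
          show "0 \<le> m" "m \<le> s" "s \<le> 1" using True l m s01 by auto
          show "\<forall>p\<in>F. p < m \<or> s < p"
          proof
            fix p assume "p \<in> F" from noF[OF this] show "p < m \<or> s < p" using m r by linarith
          qed
        qed
      next
        case False
        have "\<bar>A m - A s\<bar> \<le> \<epsilon>"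
        proof (rule FP')
          show "0 \<le> s" "s \<le> m" "m \<le> 1" using False r m s01 by auto
          show "\<forall>p\<in>F. p < s \<or> m < p"
          proof
            fix p assume "p \<in> F" from noF[OF this] show "p < s \<or> m < p" using m l by linarith
          qed
        qed
        thus ?thesis by (simp add: abs_minus_commute)
      qed
      thus ?thesis using False unfolding stepf_def m_def l_def r_def L_def R_def by simp
    qed
  qed
qed




lemma osc_ge:
  assumes "bounded_on A a b" "a \<le> t" "t \<le> \<tau>" "\<tau> \<le> \<sigma>" "\<sigma> \<le> s" "s \<le> b"
  shows "\<bar>A \<sigma> - A \<tau>\<bar> \<le> osc A t s"
proof -
  obtain M where M: "\<forall>s\<in>{a..b}. \<bar>A s\<bar> \<le> M" using assms(1) unfolding bounded_on_def by blast
  have "bdd_above ((\<lambda>p. \<bar>A (snd p) - A (fst p)\<bar>) ` {(\<tau>,\<sigma>). t \<le> \<tau> \<and> \<tau> \<le> \<sigma> \<and> \<sigma> \<le> s})"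
  proof (rule bdd_aboveI[of _ "2*M"])
    fix y assume "y \<in> (\<lambda>p. \<bar>A (snd p) - A (fst p)\<bar>) ` {(\<tau>,\<sigma>). t \<le> \<tau> \<and> \<tau> \<le> \<sigma> \<and> \<sigma> \<le> s}"
    then obtain p q where pq: "y = \<bar>A q - A p\<bar>" "t \<le> p" "p \<le> q" "q \<le> s" by auto
    have "\<bar>A p\<bar> \<le> M" "\<bar>A q\<bar> \<le> M" using M pq assms by auto
    thus "y \<le> 2*M" using pq by linarith
  qed
  moreover have "(\<tau>, \<sigma>) \<in> {(\<tau>,\<sigma>). t \<le> \<tau> \<and> \<tau> \<le> \<sigma> \<and> \<sigma> \<le> s}" using assms by auto
  ultimately show ?thesis unfolding osc_def
    by (metis (no_types, lifting) cSUP_upper fst_conv snd_conv)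
qed

lemma LOC_cont:
  assumes "continuous_on {0..1} A" "\<epsilon> > 0"
  shows "LOC A \<epsilon>"
  unfolding LOC_def
proof
  fix c :: real assume c: "c \<in> {0..1}"
  obtain d where d: "d > 0" "\<forall>y\<in>{0..1}. dist y c < d \<longrightarrow> dist (A y) (A c) < \<epsilon>/2"
    using assms c unfolding continuous_on_iff by (meson half_gt_zero)
  have *: "\<bar>A v - A u\<bar> \<le> \<epsilon>" if "u \<in> {0..1}" "v \<in> {0..1}" "\<bar>u - c\<bar> < d" "\<bar>v - c\<bar> < d" for u v
  proof -
    have "\<bar>A u - A c\<bar> < \<epsilon>/2" "\<bar>A v - A c\<bar> < \<epsilon>/2" using d that by (auto simp: dist_real_def)
    thus ?thesis by linarith
  qed
  show "\<exists>h>0. (\<forall>u v. 0 \<le> u \<longrightarrow> v \<le> 1 \<longrightarrow> c - h < u \<longrightarrow> u \<le> v \<longrightarrow> v < c \<longrightarrow> \<bar>A v - A u\<bar> \<le> \<epsilon>) \<and>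
     (\<forall>u v. 0 \<le> u \<longrightarrow> v \<le> 1 \<longrightarrow> c < u \<longrightarrow> u \<le> v \<longrightarrow> v < c + h \<longrightarrow> \<bar>A v - A u\<bar> \<le> \<epsilon>)"
    by (rule exI[of _ d]) (auto intro!: * simp: d(1))
qed

lemma LOC_bv:
  assumes "bounded_variation_on A 0 1" "\<epsilon> > 0"
  shows "LOC A \<epsilon>"
  unfolding LOC_def
proof
  fix c :: real assume c: "c \<in> {0..1}"
  obtain h1 where h1: "h1 > 0" "\<forall>u v. 0 \<le> u \<longrightarrow> v \<le> 1 \<longrightarrow> c - h1 < u \<longrightarrow> u \<le> v \<longrightarrow> v < c \<longrightarrow> \<bar>A v - A u\<bar> \<le> \<epsilon>"
    using bv_left[OF assms] by blast
  obtain h2 where h2: "h2 > 0" "\<forall>u v. 0 \<le> u \<longrightarrow> v \<le> 1 \<longrightarrow> c < u \<longrightarrow> u \<le> v \<longrightarrow> v < c + h2 \<longrightarrow> \<bar>A v - A u\<bar> \<le> \<epsilon>"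
    using bv_right[OF assms] by blast
  show "\<exists>h>0. (\<forall>u v. 0 \<le> u \<longrightarrow> v \<le> 1 \<longrightarrow> c - h < u \<longrightarrow> u \<le> v \<longrightarrow> v < c \<longrightarrow> \<bar>A v - A u\<bar> \<le> \<epsilon>) \<and>
     (\<forall>u v. 0 \<le> u \<longrightarrow> v \<le> 1 \<longrightarrow> c < u \<longrightarrow> u \<le> v \<longrightarrow> v < c + h \<longrightarrow> \<bar>A v - A u\<bar> \<le> \<epsilon>)"
    using h1 h2 by (intro exI[of _ "min h1 h2"]) auto
qed

lemma LOC_Omega:
  assumes "Omega01 A" "\<epsilon> > 0"
  shows "LOC A \<epsilon>"
  unfolding LOC_def
proof
  fix c :: real assume c: "c \<in> {0..1}"
  obtain a where a: "a \<in> {0<..<1}" "Omega_eps \<epsilon> 0 a A" "bounded_variation_on A a 1"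
    using assms unfolding Omega01_def by blast
  have bnd: "bounded_on A 0 a" using a(2) unfolding Omega_eps_def by blast
  obtain \<delta> where \<delta>: "\<delta> > 0" "\<forall>t\<in>{0..a}. \<forall>s\<in>{0..a}. 0 \<le> s - t \<and> s - t \<le> \<delta> \<longrightarrow> osc A t s \<le> \<epsilon>"
    using a(2) unfolding Omega_eps_def by blast
  have small: "\<bar>A v - A u\<bar> \<le> \<epsilon>" if "0 \<le> u" "u \<le> v" "v \<le> a" "v - u < \<delta>" for u v
  proof -
    have "\<bar>A v - A u\<bar> \<le> osc A u v" by (rule osc_ge[OF bnd]) (use that in auto)
    also have "\<dots> \<le> \<epsilon>" using \<delta>(2) that by auto
    finally show ?thesis .
  qed
  obtain h1 where h1: "h1 > 0" "\<forall>u v. 0 \<le> u \<longrightarrow> v \<le> 1 \<longrightarrow> c - h1 < u \<longrightarrow> u \<le> v \<longrightarrow> v < c \<longrightarrow> \<bar>A v - A u\<bar> \<le> \<epsilon>"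
  proof (cases "c \<le> a")
    case True
    show ?thesis
      by (rule that[of \<delta>]) (use \<delta>(1) True in \<open>auto intro!: small\<close>)
  next
    case False
    obtain h where h: "h > 0" "\<forall>u v. a \<le> u \<longrightarrow> v \<le> 1 \<longrightarrow> c - h < u \<longrightarrow> u \<le> v \<longrightarrow> v < c \<longrightarrow> \<bar>A v - A u\<bar> \<le> \<epsilon>"
      using bv_left[OF a(3) assms(2)] by blast
    show ?thesis
      by (rule that[of "min h (c - a)"]) (use h False in auto)
  qed
  obtain h2 where h2: "h2 > 0" "\<forall>u v. 0 \<le> u \<longrightarrow> v \<le> 1 \<longrightarrow> c < u \<longrightarrow> u \<le> v \<longrightarrow> v < c + h2 \<longrightarrow> \<bar>A v - A u\<bar> \<le> \<epsilon>"
  proof (cases "c < a")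
    case True
    show ?thesis
      by (rule that[of "min \<delta> (a - c)"]) (use \<delta>(1) True c in \<open>auto intro!: small\<close>)
  next
    case False
    obtain h where h: "h > 0" "\<forall>u v. a \<le> u \<longrightarrow> v \<le> 1 \<longrightarrow> c < u \<longrightarrow> u \<le> v \<longrightarrow> v < c + h \<longrightarrow> \<bar>A v - A u\<bar> \<le> \<epsilon>"
      using bv_right[OF a(3) assms(2)] by blast
    show ?thesis
      by (rule that[of h]) (use h False in auto)
  qed
  show "\<exists>h>0. (\<forall>u v. 0 \<le> u \<longrightarrow> v \<le> 1 \<longrightarrow> c - h < u \<longrightarrow> u \<le> v \<longrightarrow> v < c \<longrightarrow> \<bar>A v - A u\<bar> \<le> \<epsilon>) \<and>
     (\<forall>u v. 0 \<le> u \<longrightarrow> v \<le> 1 \<longrightarrow> c < u \<longrightarrow> u \<le> v \<longrightarrow> v < c + h \<longrightarrow> \<bar>A v - A u\<bar> \<le> \<epsilon>)"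
    using h1 h2 by (intro exI[of _ "min h1 h2"]) auto
qed




lemma RS_add:
  assumes "RS_integrable A x 0 1" "RS_integrable B x 0 1"
  shows "RS_integrable (\<lambda>s. A s + B s) x 0 1"
proof -
  obtain I1 where I1: "\<forall>\<epsilon>>0. \<exists>\<delta>>0. \<forall>n t \<tau>. is_partition 0 1 n t \<and> (\<forall>i<n. t (Suc i) - t i < \<delta>) \<and>
        (\<forall>i<n. t i \<le> \<tau> i \<and> \<tau> i \<le> t (Suc i)) \<longrightarrow> \<bar>RS_sum A x n t \<tau> - I1\<bar> < \<epsilon>"
    using assms(1) unfolding RS_integrable_def by blast
  obtain I2 where I2: "\<forall>\<epsilon>>0. \<exists>\<delta>>0. \<forall>n t \<tau>. is_partition 0 1 n t \<and> (\<forall>i<n. t (Suc i) - t i < \<delta>) \<and>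
        (\<forall>i<n. t i \<le> \<tau> i \<and> \<tau> i \<le> t (Suc i)) \<longrightarrow> \<bar>RS_sum B x n t \<tau> - I2\<bar> < \<epsilon>"
    using assms(2) unfolding RS_integrable_def by blast
  show ?thesis
    unfolding RS_integrable_def
  proof (rule exI[of _ "I1 + I2"], intro allI impI)
    fix \<epsilon> :: real assume e: "\<epsilon> > 0"
    obtain \<delta>1 where d1: "\<delta>1 > 0" "\<forall>n t \<tau>. is_partition 0 1 n t \<and> (\<forall>i<n. t (Suc i) - t i < \<delta>1) \<and>
        (\<forall>i<n. t i \<le> \<tau> i \<and> \<tau> i \<le> t (Suc i)) \<longrightarrow> \<bar>RS_sum A x n t \<tau> - I1\<bar> < \<epsilon>/2"
      using I1 e by (metis half_gt_zero)
    obtain \<delta>2 where d2: "\<delta>2 > 0" "\<forall>n t \<tau>. is_partition 0 1 n t \<and> (\<forall>i<n. t (Suc i) - t i < \<delta>2) \<and>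
        (\<forall>i<n. t i \<le> \<tau> i \<and> \<tau> i \<le> t (Suc i)) \<longrightarrow> \<bar>RS_sum B x n t \<tau> - I2\<bar> < \<epsilon>/2"
      using I2 e by (metis half_gt_zero)
    show "\<exists>\<delta>>0. \<forall>n t \<tau>. is_partition 0 1 n t \<and> (\<forall>i<n. t (Suc i) - t i < \<delta>) \<and>
        (\<forall>i<n. t i \<le> \<tau> i \<and> \<tau> i \<le> t (Suc i)) \<longrightarrow> \<bar>RS_sum (\<lambda>s. A s + B s) x n t \<tau> - (I1 + I2)\<bar> < \<epsilon>"
    proof (intro exI[of _ "min \<delta>1 \<delta>2"] conjI allI impI)
      show "min \<delta>1 \<delta>2 > 0" using d1 d2 by simp
      fix n t \<tau>
      assume H: "is_partition 0 1 n t \<and> (\<forall>i<n. t (Suc i) - t i < min \<delta>1 \<delta>2) \<and> (\<forall>i<n. t i \<le> \<tau> i \<and> \<tau> i \<le> t (Suc i))"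
      have "\<bar>RS_sum A x n t \<tau> - I1\<bar> < \<epsilon>/2" using d1(2) H by auto
      moreover have "\<bar>RS_sum B x n t \<tau> - I2\<bar> < \<epsilon>/2" using d2(2) H by auto
      moreover have "RS_sum (\<lambda>s. A s + B s) x n t \<tau> = RS_sum A x n t \<tau> + RS_sum B x n t \<tau>"
        unfolding RS_sum_def by (simp add: distrib_right sum.distrib)
      ultimately show "\<bar>RS_sum (\<lambda>s. A s + B s) x n t \<tau> - (I1 + I2)\<bar> < \<epsilon>" by linarith
    qed
  qed
qed

lemma part01:
  assumes "is_partition 0 1 n t" "i \<le> n"
  shows "0 \<le> t i" "t i \<le> 1"
proof -
  have "t 0 \<le> t i" "t i \<le> t n" using part_le[OF assms(1)] assms(2) by auto
  thus "0 \<le> t i" "t i \<le> 1" using assms(1) unfolding is_partition_def by auto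
qed

lemma tag01:
  assumes "is_partition 0 1 n t" "i < n" "t i \<le> \<tau> i \<and> \<tau> i \<le> t (Suc i)"
  shows "0 \<le> \<tau> i" "\<tau> i \<le> 1"
  using part01[OF assms(1), of i] part01[OF assms(1), of "Suc i"] assms(2,3) by auto

lemma RS_sum_const_on:
  assumes "is_partition 0 1 n t" "\<forall>i<n. t i \<le> \<tau> i \<and> \<tau> i \<le> t (Suc i)" "\<forall>s\<in>{0..1}. B s = c"
  shows "RS_sum B x n t \<tau> = c * (x 1 - x 0)"
proof -
  have "RS_sum B x n t \<tau> = (\<Sum>i<n. c * (x (t (Suc i)) - x (t i)))"
    unfolding RS_sum_def
  proof (rule sum.cong)
    fix i assume "i \<in> {..<n}"
    hence "\<tau> i \<in> {0..1}" using tag01[OF assms(1)] assms(2) by auto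
    thus "B (\<tau> i) * (x (t (Suc i)) - x (t i)) = c * (x (t (Suc i)) - x (t i))" using assms(3) by simp
  qed simp
  also have "\<dots> = c * (x (t n) - x (t 0))"
    using sum_lessThan_telescope[of "\<lambda>i. x (t i)" n] by (simp add: sum_distrib_left[symmetric])
  finally show ?thesis using assms(1) unfolding is_partition_def by simp
qed

lemma RS_const_on:
  assumes "\<forall>s\<in>{0..1}. B s = c"
  shows "RS_integrable B x 0 1"
  unfolding RS_integrable_def
proof (rule exI[of _ "c * (x 1 - x 0)"], intro allI impI)
  fix \<epsilon> :: real assume e: "\<epsilon> > 0"
  have "\<forall>n t \<tau>. is_partition 0 1 n t \<and> (\<forall>i<n. t (Suc i) - t i < 1) \<and>
        (\<forall>i<n. t i \<le> \<tau> i \<and> \<tau> i \<le> t (Suc i)) \<longrightarrow> \<bar>RS_sum B x n t \<tau> - c * (x 1 - x 0)\<bar> < \<epsilon>"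
  proof (intro allI impI)
    fix n t \<tau>
    assume H: "is_partition 0 1 n t \<and> (\<forall>i<n. t (Suc i) - t i < 1) \<and> (\<forall>i<n. t i \<le> \<tau> i \<and> \<tau> i \<le> t (Suc i))"
    have "RS_sum B x n t \<tau> = c * (x 1 - x 0)"
      by (rule RS_sum_const_on) (use H assms in auto)
    thus "\<bar>RS_sum B x n t \<tau> - c * (x 1 - x 0)\<bar> < \<epsilon>" using e by simp
  qed
  thus "\<exists>\<delta>>0. \<forall>n t \<tau>. is_partition 0 1 n t \<and> (\<forall>i<n. t (Suc i) - t i < \<delta>) \<and>
        (\<forall>i<n. t i \<le> \<tau> i \<and> \<tau> i \<le> t (Suc i)) \<longrightarrow> \<bar>RS_sum B x n t \<tau> - c * (x 1 - x 0)\<bar> < \<epsilon>"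
    by (intro exI[of _ 1]) simp
qed

lemma RS_diff_bound:
  assumes "is_partition 0 1 n t" "\<forall>i<n. t i \<le> \<tau> i \<and> \<tau> i \<le> t (Suc i)" "\<forall>s\<in>{0..1}. \<bar>A s - B s\<bar> \<le> e"
  shows "\<bar>RS_sum A x n t \<tau> - RS_sum B x n t \<tau>\<bar> \<le> e * (\<Sum>i<n. \<bar>x (t (Suc i)) - x (t i)\<bar>)"
proof -
  have "RS_sum A x n t \<tau> - RS_sum B x n t \<tau> = (\<Sum>i<n. (A (\<tau> i) - B (\<tau> i)) * (x (t (Suc i)) - x (t i)))"
    unfolding RS_sum_def by (simp add: sum_subtractf left_diff_distrib)
  also have "\<bar>\<dots>\<bar> \<le> (\<Sum>i<n. \<bar>(A (\<tau> i) - B (\<tau> i)) * (x (t (Suc i)) - x (t i))\<bar>)"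
    by (rule sum_abs)
  also have "\<dots> \<le> (\<Sum>i<n. e * \<bar>x (t (Suc i)) - x (t i)\<bar>)"
  proof (rule sum_mono)
    fix i assume "i \<in> {..<n}"
    hence "\<tau> i \<in> {0..1}" using tag01[OF assms(1)] assms(2) by auto
    hence "\<bar>A (\<tau> i) - B (\<tau> i)\<bar> \<le> e" using assms(3) by blast
    thus "\<bar>(A (\<tau> i) - B (\<tau> i)) * (x (t (Suc i)) - x (t i))\<bar> \<le> e * \<bar>x (t (Suc i)) - x (t i)\<bar>"
      by (simp add: abs_mult mult_right_mono)
  qed
  also have "\<dots> = e * (\<Sum>i<n. \<bar>x (t (Suc i)) - x (t i)\<bar>)" by (simp add: sum_distrib_left)
  finally show ?thesis .
qed

lemma fine_partition:
  assumes "\<delta> > 0"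
  shows "\<exists>n t \<tau>. is_partition 0 1 n t \<and> (\<forall>i<n. t (Suc i) - t i < \<delta>) \<and> (\<forall>i<n. t i \<le> \<tau> i \<and> \<tau> i \<le> t (Suc i))"
proof -
  obtain N :: nat where N: "1 / \<delta> < real N" using reals_Archimedean2 by blast
  have Npos: "real N > 0" using N assms by (smt (verit) divide_pos_pos)
  define t where "t = (\<lambda>i::nat. real i / real N)"
  have "is_partition 0 1 N t" unfolding is_partition_def t_def using Npos
    by (auto simp: divide_strict_right_mono)
  moreover have "\<forall>i<N. t (Suc i) - t i < \<delta>"
  proof (intro allI impI)
    fix i
    have "t (Suc i) - t i = 1 / real N" unfolding t_def by (simp add: add_divide_distrib)
    also have "\<dots> < \<delta>" using N assms Npos by (simp add: field_simps)
    finally show "t (Suc i) - t i < \<delta>" .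
  qed
  moreover have "\<forall>i<N. t i \<le> t i \<and> t i \<le> t (Suc i)" unfolding t_def using Npos
    by (auto simp: divide_right_mono)
  ultimately show ?thesis by blast
qed




lemma step_int:
  assumes xc: "continuous_on {0..1} x" and p: "0 \<le> p" "p \<le> 1"
  shows "RS_integrable (\<lambda>s. if s < p then \<alpha> else if s = p then \<gamma> else \<beta>) x 0 1"
proof -
  define G where "G = (\<lambda>s::real. if s < p then \<alpha> else if s = p then \<gamma> else \<beta>)"
  define C where "C = \<bar>\<alpha>\<bar> + \<bar>\<beta>\<bar> + \<bar>\<gamma>\<bar> + 1"
  have C: "C > 0" unfolding C_def by simp
  have GC: "\<bar>G s\<bar> \<le> \<bar>\<alpha>\<bar> + \<bar>\<beta>\<bar> + \<bar>\<gamma>\<bar>" for s unfolding G_def by auto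
  have uc: "uniformly_continuous_on {0..1} x" by (rule compact_uniformly_continuous[OF xc compact_Icc])
  define I where "I = \<alpha> * (x p - x 0) + \<beta> * (x 1 - x p)"
  show ?thesis
    unfolding RS_integrable_def G_def[symmetric]
  proof (rule exI[of _ I], intro allI impI)
    fix \<epsilon> :: real assume \<epsilon>: "\<epsilon> > 0"
    define e where "e = \<epsilon> / (8 * C)"
    have e: "e > 0" unfolding e_def using \<epsilon> C by simp
    obtain \<delta> where \<delta>: "\<delta> > 0" "\<forall>a\<in>{0..1}. \<forall>b\<in>{0..1}. dist b a < \<delta> \<longrightarrow> dist (x b) (x a) < e"
      using uc e unfolding uniformly_continuous_on_def by metis
    have xd: "\<bar>x b - x a\<bar> < e" if "a \<in> {0..1}" "b \<in> {0..1}" "\<bar>b - a\<bar> < \<delta>" for a b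
      using \<delta>(2) that by (auto simp: dist_real_def)
    have main: "\<bar>RS_sum G x n t \<tau> - I\<bar> < \<epsilon>"
      if P: "is_partition 0 1 n t" and mesh: "\<forall>i<n. t (Suc i) - t i < \<delta>"
        and tag: "\<forall>i<n. t i \<le> \<tau> i \<and> \<tau> i \<le> t (Suc i)" for n t \<tau>
    proof -
      have t01: "0 \<le> t i" "t i \<le> 1" if "i \<le> n" for i using part01[OF P that] by auto
      have tl: "t i < t (Suc i)" if "i < n" for i using P that unfolding is_partition_def by auto
      define tm where "tm i = G (\<tau> i) * (x (t (Suc i)) - x (t i)) -
         (\<alpha> * (x (min p (t (Suc i))) - x (min p (t i))) + \<beta> * (x (max p (t (Suc i))) - x (max p (t i))))" for i
      have tel1: "(\<Sum>i<n. x (min p (t (Suc i))) - x (min p (t i))) = x p - x 0"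
        using sum_lessThan_telescope[of "\<lambda>i. x (min p (t i))" n] P p unfolding is_partition_def by simp
      have tel2: "(\<Sum>i<n. x (max p (t (Suc i))) - x (max p (t i))) = x 1 - x p"
        using sum_lessThan_telescope[of "\<lambda>i. x (max p (t i))" n] P p unfolding is_partition_def by simp
      have Ieq: "I = (\<Sum>i<n. \<alpha> * (x (min p (t (Suc i))) - x (min p (t i))) + \<beta> * (x (max p (t (Suc i))) - x (max p (t i))))"
        unfolding I_def by (simp add: sum.distrib sum_distrib_left[symmetric] tel1 tel2)
      have diff: "RS_sum G x n t \<tau> - I = (\<Sum>i<n. tm i)"
        unfolding RS_sum_def Ieq tm_def by (simp add: sum_subtractf)
      define S where "S = {i. i < n \<and> t i \<le> p \<and> p \<le> t (Suc i)}"
      have finS: "finite S" unfolding S_def by simp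
      have tb: "\<bar>tm i\<bar> \<le> (if i \<in> S then 2 * C * e else 0)" if i: "i < n" for i
      proof -
        have ti: "t i \<le> \<tau> i" "\<tau> i \<le> t (Suc i)" using tag i by auto
        have ts: "t i < t (Suc i)" using tl i .
        consider (a) "t (Suc i) < p" | (b) "p < t i" | (c) "t i \<le> p" "p \<le> t (Suc i)" by linarith
        thus ?thesis
        proof cases
          case a
          hence "G (\<tau> i) = \<alpha>" using ti unfolding G_def by auto
          moreover have "min p (t (Suc i)) = t (Suc i)" "min p (t i) = t i" "max p (t (Suc i)) = p" "max p (t i) = p"
            using a ts by auto
          ultimately have "tm i = 0" unfolding tm_def by simp
          thus ?thesis using C e by simp
        next
          case b
          hence "G (\<tau> i) = \<beta>" using ti unfolding G_def by auto
          moreover have "min p (t (Suc i)) = p" "min p (t i) = p" "max p (t (Suc i)) = t (Suc i)" "max p (t i) = t i"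
            using b ts by auto
          ultimately have "tm i = 0" unfolding tm_def by simp
          thus ?thesis using C e by simp
        next
          case c
          hence iS: "i \<in> S" unfolding S_def using i by simp
          have mm: "min p (t (Suc i)) = p" "min p (t i) = t i" "max p (t (Suc i)) = t (Suc i)" "max p (t i) = p"
            using c by auto
          have a0: "t i \<in> {0..1}" "t (Suc i) \<in> {0..1}" using t01[of i] t01[of "Suc i"] i by auto
          have pin: "p \<in> {0..1}" using p by simp
          have m: "t (Suc i) - t i < \<delta>" using mesh i by simp
          have d1: "\<bar>x (t (Suc i)) - x (t i)\<bar> < e" by (rule xd) (use a0 m ts in auto)
          have d2: "\<bar>x p - x (t i)\<bar> < e" by (rule xd) (use a0 pin m c in auto)
          have d3: "\<bar>x (t (Suc i)) - x p\<bar> < e" by (rule xd) (use a0 pin m c in auto)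
          have tmi: "tm i = G (\<tau> i) * (x (t (Suc i)) - x (t i)) - (\<alpha> * (x p - x (t i)) + \<beta> * (x (t (Suc i)) - x p))"
            unfolding tm_def mm ..
          have b1: "\<bar>G (\<tau> i) * (x (t (Suc i)) - x (t i))\<bar> \<le> (\<bar>\<alpha>\<bar> + \<bar>\<beta>\<bar> + \<bar>\<gamma>\<bar>) * e"
            unfolding abs_mult by (rule mult_mono) (use GC d1 in auto)
          have b2: "\<bar>\<alpha> * (x p - x (t i))\<bar> \<le> \<bar>\<alpha>\<bar> * e"
            unfolding abs_mult by (rule mult_left_mono) (use d2 in auto)
          have b3: "\<bar>\<beta> * (x (t (Suc i)) - x p)\<bar> \<le> \<bar>\<beta>\<bar> * e"
            unfolding abs_mult by (rule mult_left_mono) (use d3 in auto)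
          have "\<bar>tm i\<bar> \<le> (\<bar>\<alpha>\<bar> + \<bar>\<beta>\<bar> + \<bar>\<gamma>\<bar>) * e + \<bar>\<alpha>\<bar> * e + \<bar>\<beta>\<bar> * e"
            unfolding tmi using b1 b2 b3 by linarith
          also have "\<dots> \<le> 2 * C * e" unfolding C_def using e by (simp add: algebra_simps)
          finally show ?thesis using iS by simp
        qed
      qed
      have cardS: "card S \<le> 2"
      proof (cases "S = {}")
        case True thus ?thesis by simp
      next
        case False
        define m where "m = Min S"
        have mS: "m \<in> S" unfolding m_def using finS False by (rule Min_in)
        have "S \<subseteq> {m, Suc m}"
        proof
          fix j assume j: "j \<in> S"
          have "m \<le> j" unfolding m_def using finS j by simp
          show "j \<in> {m, Suc m}"
          proof (rule ccontr)
            assume "j \<notin> {m, Suc m}"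
            hence "Suc m < j" using \<open>m \<le> j\<close> by auto
            moreover have "j \<le> n" using j unfolding S_def by simp
            ultimately have "t (Suc m) < t j" using part_less[OF P] by blast
            moreover have "p \<le> t (Suc m)" using mS unfolding S_def by simp
            moreover have "t j \<le> p" using j unfolding S_def by simp
            ultimately show False by linarith
          qed
        qed
        hence "card S \<le> card {m, Suc m}" by (rule card_mono[rotated]) simp
        also have "\<dots> \<le> 2" by (simp add: card_insert_if)
        finally show ?thesis .
      qed
      have "\<bar>RS_sum G x n t \<tau> - I\<bar> \<le> (\<Sum>i<n. \<bar>tm i\<bar>)" unfolding diff by (rule sum_abs)
      also have "\<dots> \<le> (\<Sum>i<n. if i \<in> S then 2 * C * e else 0)" by (rule sum_mono) (use tb in auto)
      also have "\<dots> = (\<Sum>i\<in>{..<n} \<inter> S. 2 * C * e)" by (rule sum.inter_restrict[symmetric]) simp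
      also have "{..<n} \<inter> S = S" unfolding S_def by auto
      also have "(\<Sum>i\<in>S. 2 * C * e) = real (card S) * (2 * C * e)" by simp
      also have "\<dots> \<le> 2 * (2 * C * e)" using cardS C e by (intro mult_right_mono) auto
      also have "\<dots> = \<epsilon> / 2" unfolding e_def using C by (simp add: field_simps)
      also have "\<dots> < \<epsilon>" using \<epsilon> by simp
      finally show ?thesis .
    qed
    show "\<exists>\<delta>>0. \<forall>n t \<tau>. is_partition 0 1 n t \<and> (\<forall>i<n. t (Suc i) - t i < \<delta>) \<and>
        (\<forall>i<n. t i \<le> \<tau> i \<and> \<tau> i \<le> t (Suc i)) \<longrightarrow> \<bar>RS_sum G x n t \<tau> - I\<bar> < \<epsilon>"
      using main \<delta>(1) by blast
  qed
qed




lemma LC_int: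
  assumes xc: "continuous_on {0..1} x"
  shows "finite F \<Longrightarrow> LC F B \<Longrightarrow> RS_integrable B x 0 1"
proof (induction F arbitrary: B rule: finite_induct)
  case empty
  have "\<forall>s\<in>{0..1}. B s = B 0"
  proof
    fix s :: real assume "s \<in> {0..1}"
    thus "B s = B 0" using empty.prems unfolding LC_def by (metis atLeastAtMost_iff empty_iff order_refl)
  qed
  thus ?case by (rule RS_const_on)
next
  case (insert p F)
  have LCi: "B u = B v" if "0 \<le> u" "u \<le> v" "v \<le> 1" "p < u \<or> v < p" "\<forall>q\<in>F. q < u \<or> v < q" for u v
    using insert.prems that unfolding LC_def by auto
  show ?case
  proof (cases "p \<in> {0..1}")
    case False
    have "LC F B" unfolding LC_def
    proof (intro allI impI)
      fix u v :: real assume "0 \<le> u" "u \<le> v" "v \<le> 1" "\<forall>q\<in>F. q < u \<or> v < q"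
      moreover have "p < u \<or> v < p" using False calculation by auto
      ultimately show "B u = B v" using LCi by blast
    qed
    thus ?thesis by (rule insert.IH)
  next
    case True
    obtain d where d: "d > 0" "\<forall>q\<in>F. q \<noteq> p \<longrightarrow> d \<le> dist p q"
      using finite_set_avoid[OF insert.hyps(1)] by blast
    have p01: "0 \<le> p" "p \<le> 1" using True by auto
    define \<eta> where "\<eta> = d / 2"
    have \<eta>: "\<eta> > 0" unfolding \<eta>_def using d by simp
    have farF: "q < p - \<eta> \<or> p + \<eta> < q" if "q \<in> F" for q
    proof -
      have "q \<noteq> p" using that insert.hyps(2) by auto
      hence "d \<le> \<bar>p - q\<bar>" using d that by (auto simp: dist_real_def)
      thus ?thesis unfolding \<eta>_def using d by linarith
    qed
    define wl where "wl = max 0 (p - \<eta>)"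
    define wr where "wr = min 1 (p + \<eta>)"
    define Lv where "Lv = B wl"
    define Rv where "Rv = B wr"
    define cc where "cc = (if 0 < p then Lv else Rv)"
    have LEFT: "B u = Lv" if u: "0 \<le> u" "u < p" "\<forall>q\<in>F. q < u \<or> p < q" for u
    proof -
      have wl: "0 \<le> wl" "wl < p" "wl \<le> 1" unfolding wl_def using u \<eta> True by auto
      show ?thesis
      proof (cases "u \<le> wl")
        case True
        have "B u = B wl"
        proof (rule LCi)
          show "\<forall>q\<in>F. q < u \<or> wl < q"
          proof
            fix q assume "q \<in> F" thus "q < u \<or> wl < q" using u(3) wl by force
          qed
        qed (use True u wl p01 in auto)
        thus ?thesis unfolding Lv_def .
      next
        case False
        have "B wl = B u"
        proof (rule LCi)
          show "\<forall>q\<in>F. q < wl \<or> u < q"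
          proof
            fix q assume "q \<in> F" from farF[OF this] show "q < wl \<or> u < q" using u unfolding wl_def by auto
          qed
        qed (use False u wl p01 in auto)
        thus ?thesis unfolding Lv_def by simp
      qed
    qed
    have RIGHT: "B v = Rv" if v: "p < v" "v \<le> 1" "\<forall>q\<in>F. q < p \<or> v < q" for v
    proof -
      have wr: "0 \<le> wr" "p < wr" "wr \<le> 1" unfolding wr_def using v \<eta> True by auto
      show ?thesis
      proof (cases "v \<le> wr")
        case True
        have "B v = B wr"
        proof (rule LCi)
          show "\<forall>q\<in>F. q < v \<or> wr < q"
          proof
            fix q assume "q \<in> F" from farF[OF this] show "q < v \<or> wr < q" using v unfolding wr_def by auto
          qed
        qed (use True v wr p01 in auto)
        thus ?thesis unfolding Rv_def .
      next
        case False
        have "B wr = B v"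
        proof (rule LCi)
          show "\<forall>q\<in>F. q < wr \<or> v < q"
          proof
            fix q assume "q \<in> F" thus "q < wr \<or> v < q" using v(3) wr by force
          qed
        qed (use False v wr p01 in auto)
        thus ?thesis unfolding Rv_def by simp
      qed
    qed
    define B' where "B' = (\<lambda>s. if s < p then B s else if s = p then cc else B s + cc - Rv)"
    have "LC F B'" unfolding LC_def
    proof (intro allI impI)
      fix u v :: real
      assume uv: "0 \<le> u" "u \<le> v" "v \<le> 1" and H: "\<forall>q\<in>F. q < u \<or> v < q"
      consider (a) "v < p" | (b) "p < u" | (c) "u \<le> p" "p \<le> v" by linarith
      thus "B' u = B' v"
      proof cases
        case a
        have "B u = B v" using LCi[OF uv] a H by blast
        thus ?thesis using a uv unfolding B'_def by auto
      next
        case b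
        have "B u = B v" using LCi[OF uv] b H by blast
        thus ?thesis using b uv unfolding B'_def by auto
      next
        case c
        have "B' u = cc"
        proof (cases "u < p")
          case True
          have "B u = Lv" by (rule LEFT) (use True uv H c in force)+
          moreover have "0 < p" using True uv by linarith
          ultimately show ?thesis using True unfolding B'_def cc_def by simp
        next
          case False
          hence "u = p" using c by simp
          thus ?thesis unfolding B'_def by simp
        qed
        moreover have "B' v = cc"
        proof (cases "p < v")
          case True
          have "B v = Rv" by (rule RIGHT) (use True uv H c in force)+
          thus ?thesis using True unfolding B'_def by simp
        next
          case False
          hence "v = p" using c by simp
          thus ?thesis unfolding B'_def by simp
        qed
        ultimately show ?thesis by simp
      qed
    qed
    hence "RS_integrable B' x 0 1" by (rule insert.IH)
    moreover have "RS_integrable (\<lambda>s. if s < p then 0 else if s = p then B p - cc else Rv - cc) x 0 1"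
      using step_int[OF xc] True by simp
    ultimately have "RS_integrable (\<lambda>s. B' s + (if s < p then 0 else if s = p then B p - cc else Rv - cc)) x 0 1"
      by (rule RS_add)
    moreover have "(\<lambda>s. B' s + (if s < p then 0 else if s = p then B p - cc else Rv - cc)) = B"
      by (rule ext) (simp add: B'_def)
    ultimately show ?thesis by simp
  qed
qed




lemma unif_approx:
  assumes bv: "bounded_variation_on x 0 1"
    and ap: "\<And>e. e > 0 \<Longrightarrow> \<exists>B. RS_integrable B x 0 1 \<and> (\<forall>s\<in>{0..1}. \<bar>A s - B s\<bar> \<le> e)"
  shows "RS_integrable A x 0 1"
proof -
  obtain Mx where Mx: "\<And>n t. is_partition 0 1 n t \<Longrightarrow> (\<Sum>i<n. \<bar>x (t (Suc i)) - x (t i)\<bar>) \<le> Mx"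
    using bv unfolding bounded_variation_on_def by blast
  define M where "M = max Mx 1"
  have M: "M > 0" "Mx \<le> M" unfolding M_def by auto
  define Q where "Q k BI \<longleftrightarrow> (\<forall>s\<in>{0..1}. \<bar>A s - fst BI s\<bar> \<le> 1 / real (Suc k)) \<and>
     (\<forall>\<epsilon>>0. \<exists>\<delta>>0. \<forall>n t \<tau>. is_partition 0 1 n t \<and> (\<forall>i<n. t (Suc i) - t i < \<delta>) \<and>
        (\<forall>i<n. t i \<le> \<tau> i \<and> \<tau> i \<le> t (Suc i)) \<longrightarrow> \<bar>RS_sum (fst BI) x n t \<tau> - snd BI\<bar> < \<epsilon>)"
    for k :: nat and BI :: "(real \<Rightarrow> real) \<times> real"
  have "\<forall>k. \<exists>BI. Q k BI"
  proof
    fix k :: nat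
    obtain B where B: "RS_integrable B x 0 1" "\<forall>s\<in>{0..1}. \<bar>A s - B s\<bar> \<le> 1 / real (Suc k)"
      using ap[of "1 / real (Suc k)"] by auto
    from B(1) obtain I where I: "\<forall>\<epsilon>>0. \<exists>\<delta>>0. \<forall>n t \<tau>. is_partition 0 1 n t \<and> (\<forall>i<n. t (Suc i) - t i < \<delta>) \<and>
        (\<forall>i<n. t i \<le> \<tau> i \<and> \<tau> i \<le> t (Suc i)) \<longrightarrow> \<bar>RS_sum B x n t \<tau> - I\<bar> < \<epsilon>"
      unfolding RS_integrable_def by (elim exE)
    have "Q k (B, I)" unfolding Q_def fst_conv snd_conv using B(2) I by (intro conjI)
    thus "\<exists>BI. Q k BI" by (rule exI)
  qed
  then obtain f where f: "\<And>k. Q k (f k)" by (metis choice)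
  define B where "B k = fst (f k)" for k
  define I where "I k = snd (f k)" for k
  have Bap: "\<bar>A s - B k s\<bar> \<le> 1 / real (Suc k)" if "s \<in> {0..1}" for k s
  proof -
    have "\<forall>s\<in>{0..1}. \<bar>A s - B k s\<bar> \<le> 1 / real (Suc k)" using f[of k] unfolding Q_def B_def by (rule conjunct1)
    thus ?thesis using that by (rule bspec)
  qed
  have Bint: "\<exists>\<delta>>0. \<forall>n t \<tau>. is_partition 0 1 n t \<and> (\<forall>i<n. t (Suc i) - t i < \<delta>) \<and>
        (\<forall>i<n. t i \<le> \<tau> i \<and> \<tau> i \<le> t (Suc i)) \<longrightarrow> \<bar>RS_sum (B k) x n t \<tau> - I k\<bar> < \<epsilon>" if "\<epsilon> > 0" for k \<epsilon>
  proof -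
    have "\<forall>\<epsilon>>0. \<exists>\<delta>>0. \<forall>n t \<tau>. is_partition 0 1 n t \<and> (\<forall>i<n. t (Suc i) - t i < \<delta>) \<and>
        (\<forall>i<n. t i \<le> \<tau> i \<and> \<tau> i \<le> t (Suc i)) \<longrightarrow> \<bar>RS_sum (B k) x n t \<tau> - I k\<bar> < \<epsilon>"
      using f[of k] unfolding Q_def B_def I_def by (rule conjunct2)
    thus ?thesis using that by blast
  qed
  have D: "\<bar>I k - I l\<bar> \<le> (1 / real (Suc k) + 1 / real (Suc l)) * M" for k l
  proof (rule field_le_epsilon)
    fix \<eta> :: real assume \<eta>: "\<eta> > 0"
    obtain \<delta>1 where d1: "\<delta>1 > 0" "\<forall>n t \<tau>. is_partition 0 1 n t \<and> (\<forall>i<n. t (Suc i) - t i < \<delta>1) \<and>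
        (\<forall>i<n. t i \<le> \<tau> i \<and> \<tau> i \<le> t (Suc i)) \<longrightarrow> \<bar>RS_sum (B k) x n t \<tau> - I k\<bar> < \<eta>/2"
      using Bint[of "\<eta>/2" k] \<eta> by auto
    obtain \<delta>2 where d2: "\<delta>2 > 0" "\<forall>n t \<tau>. is_partition 0 1 n t \<and> (\<forall>i<n. t (Suc i) - t i < \<delta>2) \<and>
        (\<forall>i<n. t i \<le> \<tau> i \<and> \<tau> i \<le> t (Suc i)) \<longrightarrow> \<bar>RS_sum (B l) x n t \<tau> - I l\<bar> < \<eta>/2"
      using Bint[of "\<eta>/2" l] \<eta> by auto
    obtain n t \<tau> where P: "is_partition 0 1 n t" "\<forall>i<n. t (Suc i) - t i < min \<delta>1 \<delta>2"
      "\<forall>i<n. t i \<le> \<tau> i \<and> \<tau> i \<le> t (Suc i)"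
      using fine_partition[of "min \<delta>1 \<delta>2"] d1(1) d2(1) by auto
    have s1: "\<bar>RS_sum (B k) x n t \<tau> - I k\<bar> < \<eta>/2" using d1(2) P by auto
    have s2: "\<bar>RS_sum (B l) x n t \<tau> - I l\<bar> < \<eta>/2" using d2(2) P by auto
    have kl: "\<forall>s\<in>{0..1}. \<bar>B k s - B l s\<bar> \<le> 1 / real (Suc k) + 1 / real (Suc l)"
    proof
      fix s :: real assume "s \<in> {0..1}"
      from Bap[OF this, of k] Bap[OF this, of l]
      show "\<bar>B k s - B l s\<bar> \<le> 1 / real (Suc k) + 1 / real (Suc l)" by linarith
    qed
    have "\<bar>RS_sum (B k) x n t \<tau> - RS_sum (B l) x n t \<tau>\<bar> \<le>
        (1 / real (Suc k) + 1 / real (Suc l)) * (\<Sum>i<n. \<bar>x (t (Suc i)) - x (t i)\<bar>)"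
      by (rule RS_diff_bound[OF P(1) P(3) kl])
    also have "\<dots> \<le> (1 / real (Suc k) + 1 / real (Suc l)) * M"
      using Mx[OF P(1)] M by (intro mult_left_mono) auto
    finally show "\<bar>I k - I l\<bar> \<le> (1 / real (Suc k) + 1 / real (Suc l)) * M + \<eta>" using s1 s2 by linarith
  qed
  have "Cauchy I"
    unfolding Cauchy_def
  proof (intro allI impI)
    fix e :: real assume e: "e > 0"
    obtain K where K: "inverse (real (Suc K)) < e / (2 * M)" using reals_Archimedean[of "e / (2*M)"] e M by auto
    show "\<exists>N. \<forall>m\<ge>N. \<forall>n\<ge>N. dist (I m) (I n) < e"
    proof (intro exI[of _ K] allI impI)
      fix m n assume mn: "K \<le> m" "K \<le> n"
      have "1 / real (Suc m) \<le> 1 / real (Suc K)" "1 / real (Suc n) \<le> 1 / real (Suc K)"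
        using mn by (auto simp: frac_le)
      hence "(1 / real (Suc m) + 1 / real (Suc n)) * M \<le> (2 / real (Suc K)) * M"
        using M by (intro mult_right_mono) auto
      also have "\<dots> < e" using K M by (simp add: field_simps)
      finally show "dist (I m) (I n) < e" using D[of m n] by (simp add: dist_real_def)
    qed
  qed
  then obtain L where L: "I \<longlonglongrightarrow> L" using Cauchy_convergent_iff convergent_def by blast
  show ?thesis
    unfolding RS_integrable_def
  proof (rule exI[of _ L], intro allI impI)
    fix \<epsilon> :: real assume \<epsilon>: "\<epsilon> > 0"
    have e4: "\<epsilon>/4 > 0" using \<epsilon> by simp
    obtain N1 where N1': "\<forall>k\<ge>N1. norm (I k - L) < \<epsilon>/4"
      using L[unfolded LIMSEQ_iff, rule_format, OF e4] by blast
    hence N1: "\<forall>k\<ge>N1. \<bar>I k - L\<bar> < \<epsilon>/4" by simp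
    obtain N2 where N2: "inverse (real (Suc N2)) < \<epsilon> / (4 * M)"
      using reals_Archimedean[of "\<epsilon> / (4*M)"] \<epsilon> M by auto
    define k where "k = max N1 N2"
    have k1: "\<bar>I k - L\<bar> < \<epsilon>/4" using N1 unfolding k_def by simp
    have "1 / real (Suc k) \<le> 1 / real (Suc N2)" unfolding k_def by (auto simp: frac_le)
    hence "1 / real (Suc k) < \<epsilon> / (4 * M)" using N2 by (simp add: inverse_eq_divide)
    hence "1 / real (Suc k) * M < \<epsilon> / (4 * M) * M" using M by (intro mult_strict_right_mono) auto
    hence k2: "1 / real (Suc k) * M < \<epsilon> / 4" using M by simp
    obtain \<delta> where d: "\<delta> > 0" "\<forall>n t \<tau>. is_partition 0 1 n t \<and> (\<forall>i<n. t (Suc i) - t i < \<delta>) \<and>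
        (\<forall>i<n. t i \<le> \<tau> i \<and> \<tau> i \<le> t (Suc i)) \<longrightarrow> \<bar>RS_sum (B k) x n t \<tau> - I k\<bar> < \<epsilon>/4"
      using Bint[of "\<epsilon>/4" k] \<epsilon> by auto
    show "\<exists>\<delta>>0. \<forall>n t \<tau>. is_partition 0 1 n t \<and> (\<forall>i<n. t (Suc i) - t i < \<delta>) \<and>
        (\<forall>i<n. t i \<le> \<tau> i \<and> \<tau> i \<le> t (Suc i)) \<longrightarrow> \<bar>RS_sum A x n t \<tau> - L\<bar> < \<epsilon>"
    proof (intro exI[of _ \<delta>] conjI allI impI)
      show "\<delta> > 0" by (rule d(1))
      fix n t \<tau>
      assume H: "is_partition 0 1 n t \<and> (\<forall>i<n. t (Suc i) - t i < \<delta>) \<and> (\<forall>i<n. t i \<le> \<tau> i \<and> \<tau> i \<le> t (Suc i))"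
      have s1: "\<bar>RS_sum (B k) x n t \<tau> - I k\<bar> < \<epsilon>/4" using d(2) H by blast
      have "\<bar>RS_sum A x n t \<tau> - RS_sum (B k) x n t \<tau>\<bar> \<le> 1 / real (Suc k) * (\<Sum>i<n. \<bar>x (t (Suc i)) - x (t i)\<bar>)"
        using H Bap by (intro RS_diff_bound) auto
      also have "\<dots> \<le> 1 / real (Suc k) * M"
        using Mx[of n t] H M by (intro mult_left_mono) auto
      finally show "\<bar>RS_sum A x n t \<tau> - L\<bar> < \<epsilon>" using s1 k1 k2 by linarith
    qed
  qed
qed

theorem lemma4p12:
  fixes x A :: "real \<Rightarrow> real"
  assumes "continuous_on {0..1} x" and "bounded_variation_on x 0 1"
    and "Omega_hat01 A"
  shows "RS_integrable A x 0 1"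
proof (rule unif_approx[OF assms(2)])
  fix e :: real assume e: "e > 0"
  have "Omega01 A \<or> continuous_on {0..1} A \<or> bounded_variation_on A 0 1"
    using assms(3) unfolding Omega_hat01_def .
  hence "LOC A e"
  proof (elim disjE)
    assume "Omega01 A" thus "LOC A e" using LOC_Omega e by blast
  next
    assume "continuous_on {0..1} A" thus "LOC A e" using LOC_cont e by blast
  next
    assume "bounded_variation_on A 0 1" thus "LOC A e" using LOC_bv e by blast
  qed
  then obtain F where F: "finite F" "0 \<in> F" "1 \<in> F" "FP A e F" using LOC_FP by blast
  have "LC F (stepf F A)" "\<forall>s\<in>{0..1}. \<bar>A s - stepf F A s\<bar> \<le> e"
    using stepf_props[OF F] e by (auto simp del: abs_le_iff)
  moreover have "RS_integrable (stepf F A) x 0 1" by (rule LC_int[OF assms(1) F(1) calculation(1)])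
  ultimately show "\<exists>B. RS_integrable B x 0 1 \<and> (\<forall>s\<in>{0..1}. \<bar>A s - B s\<bar> \<le> e)" by blast
qed


end
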